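(* For every integer $m \geq 1$, the complete bipartite graph $K_{m,m+1}$ is stable.
   Context: For a simple graph $G$, the independence polynomial is $i(G,x)=\sum_{k=0}^{\alpha(G)} i_k(G)x^k$, where $i_k(G)$ is the number of independent sets of size $k$ in $G$ (with $i_0(G)=1$). A graph $G$ is called stable if every root $z$ of $i(G,x)$ satisfies $\mathrm{Re}(z)\leq 0$. $K_{a,b}$ denotes the complete bipartite graph with parts of sizes $a$ and $b$; its independence polynomial is $(1+x)^a+(1+x)^b-1$. *)

theory Defs
  imports "HOL-Computational_Algebra.Polynomial" Complex_Main
begin

definition simple_graph :: "'v set \<Rightarrow> ('v \<Rightarrow> 'v \<Rightarrow> bool) \<Rightarrow> bool" where
  "simple_graph V E \<longleftrightarrow> finite V \<and> (\<forall>x y. E x y \<longrightarrow> x \<in> V \<and> y \<in> V)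
     \<and> (\<forall>x y. E x y \<longrightarrow> E y x) \<and> (\<forall>x. \<not> E x x)"

definition independent_set :: "'v set \<Rightarrow> ('v \<Rightarrow> 'v \<Rightarrow> bool) \<Rightarrow> 'v set \<Rightarrow> bool" where
  "independent_set V E S \<longleftrightarrow> S \<subseteq> V \<and> (\<forall>x\<in>S. \<forall>y\<in>S. \<not> E x y)"

definition indep_count :: "'v set \<Rightarrow> ('v \<Rightarrow> 'v \<Rightarrow> bool) \<Rightarrow> nat \<Rightarrow> nat" where
  "indep_count V E k = card {S. independent_set V E S \<and> card S = k}"

text \<open>Independence polynomial i(G,x) = sum_k i_k(G) x^k (with complex coefficients);
 independent sets have size at most card V, so summing to card V covers up to alpha(G).\<close>
definition indep_poly :: "'v set \<Rightarrow> ('v \<Rightarrow> 'v \<Rightarrow> bool) \<Rightarrow> complex poly" where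
  "indep_poly V E = (\<Sum>k\<le>card V. monom (of_nat (indep_count V E k)) k)"

definition stable_graph :: "'v set \<Rightarrow> ('v \<Rightarrow> 'v \<Rightarrow> bool) \<Rightarrow> bool" where
  "stable_graph V E \<longleftrightarrow> (\<forall>z. poly (indep_poly V E) z = 0 \<longrightarrow> Re z \<le> 0)"

definition Kab_V :: "nat \<Rightarrow> nat \<Rightarrow> (nat + nat) set" where
  "Kab_V a b = {0..<a} <+> {0..<b}"

definition Kab_E :: "nat \<Rightarrow> nat \<Rightarrow> (nat + nat) \<Rightarrow> (nat + nat) \<Rightarrow> bool" where
  "Kab_E a b u v \<longleftrightarrow> u \<in> Kab_V a b \<and> v \<in> Kab_V a b \<and>
     ((\<exists>i j. u = Inl i \<and> v = Inr j) \<or> (\<exists>i j. u = Inr j \<and> v = Inl i))"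

end

theory Submission
  imports Defs
begin

lemma sum_pow_card:
  fixes z :: complex
  assumes "finite A"
  shows "(\<Sum>S\<in>Pow A. z ^ card S) = (1 + z) ^ card A"
  using assms
proof (induction A rule: finite_induct)
  case empty
  then show ?case by simp
next
  case (insert a A)
  have inj: "inj_on (insert a) (Pow A)"
  proof (rule inj_onI)
    fix X Y assume "X \<in> Pow A" "Y \<in> Pow A" "insert a X = insert a Y"
    moreover have "a \<notin> X" "a \<notin> Y" using insert.hyps(2) calculation by auto
    ultimately show "X = Y" by (metis insert_ident)
  qed
  have disj: "Pow A \<inter> insert a ` Pow A = {}" using insert.hyps(2) by auto
  have "(\<Sum>S\<in>Pow (insert a A). z ^ card S) = (\<Sum>S\<in>Pow A. z ^ card S) + (\<Sum>S\<in>insert a ` Pow A. z ^ card S)"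
    unfolding Pow_insert using insert.hyps(1) disj by (intro sum.union_disjoint) auto
  also have "(\<Sum>S\<in>insert a ` Pow A. z ^ card S) = (\<Sum>S\<in>Pow A. z ^ card (insert a S))"
    using inj by (simp add: sum.reindex)
  also have "\<dots> = (\<Sum>S\<in>Pow A. z * z ^ card S)"
  proof (rule sum.cong)
    fix S assume "S \<in> Pow A"
    then have "finite S" "a \<notin> S" using insert.hyps finite_subset by auto
    then show "z ^ card (insert a S) = z * z ^ card S" by simp
  qed simp
  also have "\<dots> = z * (1 + z) ^ card A" by (simp add: sum_distrib_left[symmetric] insert.IH)
  finally show ?case using insert.hyps insert.IH by (simp add: algebra_simps)
qed

lemma poly_indep:
  assumes "finite V"
  shows "poly (indep_poly V E) z = (\<Sum>S\<in>{S. independent_set V E S}. z ^ card S)"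
proof -
  let ?I = "{S. independent_set V E S}"
  have sub: "?I \<subseteq> Pow V" by (auto simp: independent_set_def)
  have fI: "finite ?I" using assms sub by (meson finite_Pow_iff finite_subset)
  have img: "card ` ?I \<subseteq> {..card V}"
  proof
    fix k assume "k \<in> card ` ?I"
    then obtain S where "S \<in> ?I" "k = card S" by blast
    then show "k \<in> {..card V}" using sub assms by (auto intro: card_mono)
  qed
  have "poly (indep_poly V E) z = (\<Sum>k\<le>card V. of_nat (indep_count V E k) * z ^ k)"
    unfolding indep_poly_def poly_sum poly_monom by simp
  also have "\<dots> = (\<Sum>k\<le>card V. (\<Sum>S\<in>{S\<in>?I. card S = k}. z ^ card S))"
    by (intro sum.cong refl) (simp add: indep_count_def)
  also have "\<dots> = (\<Sum>S\<in>?I. z ^ card S)"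
    by (rule sum.group[OF fI _ img]) simp
  finally show ?thesis .
qed

lemma indep_Kab:
  "{S. independent_set (Kab_V a b) (Kab_E a b) S} = Pow (Inl ` {0..<a}) \<union> Pow (Inr ` {0..<b})"
proof (intro set_eqI iffI)
  fix S assume "S \<in> {S. independent_set (Kab_V a b) (Kab_E a b) S}"
  then have sub: "S \<subseteq> Kab_V a b" and ind: "\<forall>x\<in>S. \<forall>y\<in>S. \<not> Kab_E a b x y"
    by (auto simp: independent_set_def)
  show "S \<in> Pow (Inl ` {0..<a}) \<union> Pow (Inr ` {0..<b})"
  proof (rule ccontr)
    assume "S \<notin> Pow (Inl ` {0..<a}) \<union> Pow (Inr ` {0..<b})"
    then obtain x y where "x \<in> S" "y \<in> S" "x \<notin> Inl ` {0..<a}" "y \<notin> Inr ` {0..<b}" by auto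
    moreover have "x \<in> Kab_V a b" "y \<in> Kab_V a b" using sub calculation by auto
    ultimately obtain i j where "x = Inr j" "y = Inl i"
      by (auto simp: Kab_V_def)
    then have "Kab_E a b x y" using \<open>x \<in> Kab_V a b\<close> \<open>y \<in> Kab_V a b\<close> by (auto simp: Kab_E_def)
    then show False using ind \<open>x \<in> S\<close> \<open>y \<in> S\<close> by blast
  qed
next
  fix S assume "S \<in> Pow (Inl ` {0..<a}) \<union> Pow (Inr ` {0..<b})"
  then show "S \<in> {S. independent_set (Kab_V a b) (Kab_E a b) S}"
    by (auto simp: independent_set_def Kab_V_def Kab_E_def)
qed

lemma poly_Kab:
  "poly (indep_poly (Kab_V a b) (Kab_E a b)) z = (1 + z) ^ a + (1 + z) ^ b - 1"
proof -
  let ?A = "Pow (Inl ` {0..<a}) :: (nat + nat) set set" and ?B = "Pow (Inr ` {0..<b}) :: (nat + nat) set set"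
  have fV: "finite (Kab_V a b)" by (simp add: Kab_V_def)
  have int: "?A \<inter> ?B = {{}}" by auto
  have "(\<Sum>S\<in>?A \<union> ?B. z ^ card S) + (\<Sum>S\<in>?A \<inter> ?B. z ^ card S) = (\<Sum>S\<in>?A. z ^ card S) + (\<Sum>S\<in>?B. z ^ card S)"
    by (rule sum.union_inter) auto
  moreover have "(\<Sum>S\<in>?A. z ^ card S) = (1 + z) ^ a"
    using sum_pow_card[of "Inl ` {0..<a}" z] by (simp add: card_image)
  moreover have "(\<Sum>S\<in>?B. z ^ card S) = (1 + z) ^ b"
    using sum_pow_card[of "Inr ` {0..<b}" z] by (simp add: card_image)
  ultimately have "(\<Sum>S\<in>?A \<union> ?B. z ^ card S) = (1 + z) ^ a + (1 + z) ^ b - 1"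
    using int by (simp add: algebra_simps)
  then show ?thesis using poly_indep[OF fV] indep_Kab by metis
qed

theorem proposition2p1:
  fixes m :: nat
  assumes "m \<ge> 1"
  shows "stable_graph (Kab_V m (m + 1)) (Kab_E m (m + 1))"
  unfolding stable_graph_def poly_Kab
proof (intro allI impI)
  fix z :: complex
  assume h: "(1 + z) ^ m + (1 + z) ^ (m + 1) - 1 = 0"
  show "Re z \<le> 0"
  proof (rule ccontr)
    assume "\<not> Re z \<le> 0"
    define w where "w = 1 + z"
    have rw: "Re w > 1" using \<open>\<not> Re z \<le> 0\<close> by (simp add: w_def)
    have "w ^ m * (w + 1) = 1" using h by (simp add: w_def algebra_simps)
    then have "norm w ^ m * norm (w + 1) = 1" by (metis norm_mult norm_one norm_power)
    moreover have "norm w \<ge> 1" using rw complex_Re_le_cmod[of w] by linarith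
    moreover have "norm (w + 1) > 2" using rw complex_Re_le_cmod[of "w+1"] by simp
    moreover have "norm w ^ m \<ge> 1" using calculation(2) by (simp add: one_le_power)
    ultimately have "norm w ^ m * norm (w + 1) \<ge> 1 * 2"
      by (intro mult_mono) auto
    then show False using \<open>norm w ^ m * norm (w + 1) = 1\<close> by simp
  qed
qed

end
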